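(* There are positive constants $c$ and $b$, not depending on $\varepsilon$, such that for every $t\ge0$, all integers $n>0$, $m\ge0$ and all initial positions $\underline x_0=(x_1,\dots,x_n)$, $\underline y_0=(y_1,\dots,y_{n+m})$ in $\Lambda_\varepsilon$, the coupled process started from $(\underline x_0,\{1,\dots,n\},\underline y_0,\{1,\dots,n+m\},n+m)$ satisfies $$\hat E\big[|D_{\ne}(t)|\big]\le c\,n\,e^{-b\varepsilon^2t},$$ where $D_{\ne}(t)=\{i\in I(t):x_i(t)\ne y_i(t)\}$ and $\hat E$ is expectation for the coupled process.
   Context: Fix $j>0$, $\varepsilon>0$ with $\varepsilon^{-1}\in\mathbb N$, $\Lambda_\varepsilon=\{0,\dots,\varepsilon^{-1}\}$. A labeled configuration is $(\underline x,I)$ with $I\subset\mathbb N$ finite, $x_i\in\Lambda_\varepsilon$. State space $S$: all $(\underline x,I,\underline y,J,N)$ with $I\subset J$, $|J\setminus I|\le m$, $N=\max J$. $I_==\{i\in I:x_i=y_i\}$. The coupled process is the Markov jump process on $S$ with jumps: (1) for each $i\in I\setminus I_=$ and sign $\pm$, at rate $1/2$, $x_i\to x_i\pm1$ (suppressed if outside $\Lambda_\varepsilon$); for each $i\in J\setminus I_=$ and sign, at rate $1/2$, $y_i\to y_i\pm1$ (suppressed if outside); (2) for each $i\in I_=$ and sign, at rate $1/2$, $x_i,y_i$ both move to $x_i\pm1$ (suppressed if outside); (3) at rate $\varepsilon j$: $N\to N+1$, label $N+1$ added to $I$ and $J$ with $x_{N+1}=y_{N+1}=0$; (4) at rate $\varepsilon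 j$: let $i$ be the largest label at the rightmost occupied site of $\underline x$ and $k$ the largest label at the rightmost occupied site of $\underline y$; remove $i$ from $\underline x,I$ and $k$ from $\underline y,J$; if $k\in I$ and $i\ne k$ then: if $x_k\le y_i$ relabel the $\underline y$-particle $i$ as $k$; otherwise relabel the $\underline x$-particle $k$ as $i$; $N$ unchanged. *)

theory Defs
  imports "HOL-Analysis.Analysis"
begin

text \<open>The expectation of a nonnegative observable f at time t, started at x, for the
  (minimal) Markov jump process with these rates, is defined as the supremum of the
  standard iterates of the backward integral equation (Norris, Markov Chains,
  Thm. 2.8.3/2.8.4):
    u_0(t,x)     = exp(-q(x) t) f(x)
    u_(n+1)(t,x) = exp(-q(x) t) f(x) + int_0^t exp(-q(x) s) sum_z q(x,z) u_n(t-s,z) ds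
  where q(x) is the total jump rate out of x.  u_n(t,x) = E_x[f(X_t); at most n jumps by t].\<close>

definition total_rate :: "('s \<Rightarrow> (real \<times> 's) list) \<Rightarrow> 's \<Rightarrow> real" where
  "total_rate Q s = sum_list (map fst (Q s))"

fun ctmc_iter :: "('s \<Rightarrow> (real \<times> 's) list) \<Rightarrow> ('s \<Rightarrow> ennreal) \<Rightarrow> nat \<Rightarrow> real \<Rightarrow> 's \<Rightarrow> ennreal" where
  "ctmc_iter Q f 0 t s = ennreal (exp (- total_rate Q s * t)) * f s"
| "ctmc_iter Q f (Suc n) t s =
     ennreal (exp (- total_rate Q s * t)) * f s
   + (\<integral>\<^sup>+ u. indicator {0..t} u * ennreal (exp (- total_rate Q s * u)) *
        sum_list (map (\<lambda>(r, z). ennreal r * ctmc_iter Q f n (t - u) z) (Q s)) \<partial>lborel)"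

definition ctmc_expect :: "('s \<Rightarrow> (real \<times> 's) list) \<Rightarrow> ('s \<Rightarrow> ennreal) \<Rightarrow> real \<Rightarrow> 's \<Rightarrow> ennreal" where
  "ctmc_expect Q f t s = (SUP n. ctmc_iter Q f n t s)"

text \<open>State (x, I, y, J, N): x, y give positions (only values on I resp. J are meaningful),
  I \<subseteq> J finite label sets, N the current maximal label. The lattice is
  Lambda_eps = {0..L} with L = 1/eps.\<close>

type_synonym cstate = "(nat \<Rightarrow> nat) \<times> nat set \<times> (nat \<Rightarrow> nat) \<times> nat set \<times> nat"

definition step_pos :: "nat \<Rightarrow> nat \<Rightarrow> bool \<Rightarrow> nat" where
  "step_pos L p up = (if up then (if p + 1 \<le> L then p + 1 else p) else (if 0 < p then p - 1 else p))"

definition rlab :: "(nat \<Rightarrow> nat) \<Rightarrow> nat set \<Rightarrow> nat" where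
  "rlab x I = Max {i \<in> I. x i = Max (x ` I)}"

definition equal_labels :: "cstate \<Rightarrow> nat set" where
  "equal_labels s = (case s of (x, I, y, J, N) \<Rightarrow> {i \<in> I. x i = y i})"

definition D_ne :: "cstate \<Rightarrow> nat set" where
  "D_ne s = (case s of (x, I, y, J, N) \<Rightarrow> {i \<in> I. x i \<noteq> y i})"

definition create :: "cstate \<Rightarrow> cstate" where
  "create s = (case s of (x, I, y, J, N) \<Rightarrow>
     (x(N + 1 := 0), I \<union> {N + 1}, y(N + 1 := 0), J \<union> {N + 1}, N + 1))"

text \<open>Removal rule (4). Convention when a configuration is empty: nothing is removed from it.\<close>
definition remove :: "cstate \<Rightarrow> cstate" where
  "remove s = (case s of (x, I, y, J, N) \<Rightarrow>
     (if I = {} then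
        (if J = {} then s else (x, I, y, J - {rlab y J}, N))
      else
        (let i = rlab x I; k = rlab y J; I' = I - {i}; J' = J - {k} in
          if k \<in> I \<and> i \<noteq> k then
            (if x k \<le> y i then (x, I', y(k := y i), (J' - {i}) \<union> {k}, N)
             else (x(i := x k), (I' - {k}) \<union> {i}, y, J', N))
          else (x, I', y, J', N))))"

definition coupled_jumps :: "nat \<Rightarrow> real \<Rightarrow> cstate \<Rightarrow> (real \<times> cstate) list" where
  "coupled_jumps L j s = (case s of (x, I, y, J, N) \<Rightarrow>
     (let Ieq = {i \<in> I. x i = y i} in
       concat (map (\<lambda>i. map (\<lambda>up. (1/2, (x(i := step_pos L (x i) up), I, y, J, N))) [True, False])
                   (sorted_list_of_set (I - Ieq)))
     @ concat (map (\<lambda>i. map (\<lambda>up. (1/2, (x, I, y(i := step_pos L (y i) up), J, N))) [True, False])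
                   (sorted_list_of_set (J - Ieq)))
     @ concat (map (\<lambda>i. map (\<lambda>up. (1/2, (x(i := step_pos L (x i) up), I,
                                            y(i := step_pos L (x i) up), J, N))) [True, False])
                   (sorted_list_of_set Ieq))
     @ [(j / real L, create s), (j / real L, remove s)]))"

end

theory Submission
  imports Defs
begin


definition bet :: "nat \<Rightarrow> real" where "bet L = 1 / (real L + 1)^2"

definition gfun :: "nat \<Rightarrow> nat \<Rightarrow> real" where
  "gfun L d = (if d = 0 then 0 else 1 + real d * (2 * real L + 2 - real d) * bet L)"

definition nd :: "nat \<Rightarrow> nat \<Rightarrow> nat" where "nd a b = (if a \<le> b then b - a else a - b)"

lemma bet_pos: "0 < bet L" unfolding bet_def by simp

lemma bet_le1: "bet L \<le> 1" unfolding bet_def by simp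

lemma bet_mult: "bet L * (real L + 1)^2 = 1" unfolding bet_def by simp

lemma g_le2: "gfun L d \<le> 2"
proof -
  have e: "(real L + 1)^2 - real d * (2 * real L + 2 - real d) = (real L + 1 - real d)^2"
    by (simp add: power2_eq_square algebra_simps)
  have "real d * (2 * real L + 2 - real d) \<le> (real L + 1)^2"
    using e zero_le_power2[of "real L + 1 - real d"] by linarith
  hence "real d * (2 * real L + 2 - real d) * bet L \<le> (real L + 1)^2 * bet L"
    using bet_pos[of L] by (intro mult_right_mono) auto
  also have "\<dots> = 1" using bet_mult[of L] by (simp add: mult.commute)
  finally show ?thesis unfolding gfun_def by auto
qed

lemma g_ge1: assumes "1 \<le> d" "d \<le> L + 1" shows "1 \<le> gfun L d"
proof -
  have "0 \<le> real d * (2 * real L + 2 - real d) * bet L"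
    using assms bet_pos[of L] by (intro mult_nonneg_nonneg) auto
  thus ?thesis using assms unfolding gfun_def by auto
qed

lemma g_nonneg: "d \<le> L + 1 \<Longrightarrow> 0 \<le> gfun L d"
  using g_ge1[of d L] unfolding gfun_def by (cases "d = 0") auto

lemma g_zero[simp]: "gfun L 0 = 0" unfolding gfun_def by simp

lemma g_mono: assumes "a \<le> b" "b \<le> L + 1" shows "gfun L a \<le> gfun L b"
proof (cases "a = 0")
  case True thus ?thesis using g_nonneg[OF assms(2)] by simp
next
  case False
  have "real b * (2 * real L + 2 - real b) - real a * (2 * real L + 2 - real a)
        = (real b - real a) * (2 * real L + 2 - real a - real b)" by (simp add: algebra_simps)
  also have "\<dots> \<ge> 0" using assms by (intro mult_nonneg_nonneg) auto
  finally have "real a * (2 * real L + 2 - real a) \<le> real b * (2 * real L + 2 - real b)" by simp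
  hence "real a * (2 * real L + 2 - real a) * bet L \<le> real b * (2 * real L + 2 - real b) * bet L"
    using bet_pos[of L] by (intro mult_right_mono) auto
  thus ?thesis using False assms unfolding gfun_def by auto
qed

lemma g_second: assumes "1 \<le> d" "d \<le> L"
  shows "gfun L (d - 1) + gfun L (d + 1) - 2 * gfun L d \<le> - bet L * gfun L d"
proof (cases "d = 1")
  case True
  have "(2 * real L + 1) \<le> (real L + 1)^2" by (simp add: power2_eq_square algebra_simps)
  hence "(2 * real L + 1) * bet L \<le> (real L + 1)^2 * bet L"
    using bet_pos[of L] by (intro mult_right_mono) auto
  hence b: "(2 * real L + 1) * bet L \<le> 1" using bet_mult[of L] by (simp add: mult.commute)
  have bb: "bet L * ((2 * real L + 1) * bet L) \<le> bet L" using b bet_pos[of L]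
    by (simp add: mult_le_cancel_left1)
  have g1: "gfun L 1 = 1 + (2 * real L + 1) * bet L" unfolding gfun_def by simp
  have g2: "gfun L 2 = 1 + 2 * (2 * real L) * bet L" unfolding gfun_def by simp
  have "gfun L 0 + gfun L 2 - 2 * gfun L 1 = -1 - 2 * bet L" unfolding g1 g2 by (simp add: algebra_simps)
  moreover have "- bet L * gfun L 1 = - bet L - bet L * ((2 * real L + 1) * bet L)"
    unfolding g1 by (simp add: algebra_simps)
  ultimately show ?thesis using True bb bet_le1[of L] by (simp add: numeral_2_eq_2)
next
  case False
  hence d2: "d \<ge> 2" using assms by auto
  have "gfun L (d - 1) + gfun L (d + 1) - 2 * gfun L d = - 2 * bet L"
    using d2 unfolding gfun_def by (simp add: of_nat_diff algebra_simps)
  also have "\<dots> \<le> - bet L * gfun L d" using g_le2[of L d] bet_pos[of L]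
    by (simp add: mult_le_cancel_left1 mult.commute)
  finally show ?thesis .
qed

lemma pair_core:
  fixes P R :: real and d L :: nat
  assumes "1 \<le> d" "d \<le> L" "P \<le> gfun L (d+1)" "R \<le> gfun L (d+1)"
  shows "(1/2)*(gfun L (d-1) - gfun L d) + (1/2)*(P - gfun L d) + (1/2)*(R - gfun L d)
       + (1/2)*(gfun L (d-1) - gfun L d) \<le> - bet L * gfun L d"
proof -
  have h: "gfun L (d - 1) + gfun L (d + 1) - 2 * gfun L d \<le> - bet L * gfun L d"
    by (rule g_second[OF assms(1,2)])
  have "(1/2)*(gfun L (d-1) - gfun L d) + (1/2)*(P - gfun L d) + (1/2)*(R - gfun L d)
       + (1/2)*(gfun L (d-1) - gfun L d) = gfun L (d-1) + (P + R)/2 - 2 * gfun L d"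
    by (simp add: field_simps)
  also have "\<dots> \<le> gfun L (d - 1) + gfun L (d + 1) - 2 * gfun L d" using add_mono[OF assms(3,4)] by (simp add: field_simps)
  finally show ?thesis using h by linarith
qed

lemma pair_lemma:
  assumes "a \<noteq> b" "a \<le> L" "b \<le> L"
  shows "(1/2)*(gfun L (nd (step_pos L a True) b) - gfun L (nd a b))
       + (1/2)*(gfun L (nd (step_pos L a False) b) - gfun L (nd a b))
       + (1/2)*(gfun L (nd a (step_pos L b True)) - gfun L (nd a b))
       + (1/2)*(gfun L (nd a (step_pos L b False)) - gfun L (nd a b)) \<le> - bet L * gfun L (nd a b)"
proof (cases "a < b")
  case True
  define d where "d = b - a"
  have d: "1 \<le> d" "d \<le> L" "nd a b = d" using True assms unfolding d_def nd_def by auto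
  have e1: "nd (step_pos L a True) b = d - 1" using True assms unfolding d_def nd_def step_pos_def by auto
  have e4: "nd a (step_pos L b False) = d - 1" using True assms unfolding d_def nd_def step_pos_def by auto
  have e2: "gfun L (nd (step_pos L a False) b) \<le> gfun L (d+1)"
    using True assms d by (intro g_mono) (auto simp: d_def nd_def step_pos_def)
  have e3: "gfun L (nd a (step_pos L b True)) \<le> gfun L (d+1)"
    using True assms d by (intro g_mono) (auto simp: d_def nd_def step_pos_def)
  show ?thesis using pair_core[OF d(1,2) e2 e3] unfolding e1 e4 d(3) by linarith
next
  case False
  hence ab: "b < a" using assms by auto
  define d where "d = a - b"
  have d: "1 \<le> d" "d \<le> L" "nd a b = d" using ab assms unfolding d_def nd_def by auto
  have e1: "nd (step_pos L a False) b = d - 1" using ab assms unfolding d_def nd_def step_pos_def by auto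
  have e4: "nd a (step_pos L b True) = d - 1" using ab assms unfolding d_def nd_def step_pos_def by auto
  have e2: "gfun L (nd (step_pos L a True) b) \<le> gfun L (d+1)"
    using ab assms d by (intro g_mono) (auto simp: d_def nd_def step_pos_def)
  have e3: "gfun L (nd a (step_pos L b False)) \<le> gfun L (d+1)"
    using ab assms d by (intro g_mono) (auto simp: d_def nd_def step_pos_def)
  show ?thesis using pair_core[OF d(1,2) e2 e3] unfolding e1 e4 d(3) by linarith
qed

definition Vf :: "nat \<Rightarrow> cstate \<Rightarrow> real" where
  "Vf L s = (case s of (x, I, y, J, N) \<Rightarrow> \<Sum>i\<in>I. gfun L (nd (x i) (y i)))"

definition Inv :: "nat \<Rightarrow> cstate \<Rightarrow> bool" where
  "Inv L s = (case s of (x, I, y, J, N) \<Rightarrow>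
      finite J \<and> I \<subseteq> J \<and> (\<forall>i\<in>I. x i \<le> L) \<and> (\<forall>i\<in>J. y i \<le> L))"

lemma nd_le: "a \<le> L \<Longrightarrow> b \<le> L \<Longrightarrow> nd a b \<le> L" unfolding nd_def by auto

lemma nd_self[simp]: "nd a a = 0" unfolding nd_def by auto

lemma Vf_nonneg: assumes "Inv L (x, I, y, J, N)" shows "0 \<le> Vf L (x, I, y, J, N)"
  using assms unfolding Vf_def Inv_def
  by (auto intro!: sum_nonneg g_nonneg simp: subset_iff) (meson le_SucI nd_le)

lemma V_upd:
  assumes "finite I" "i \<in> I" "\<And>k. k \<in> I \<Longrightarrow> k \<noteq> i \<Longrightarrow> x' k = x k \<and> y' k = y k"
  shows "Vf L (x', I, y', J', N') = Vf L (x, I, y, J, N) - gfun L (nd (x i) (y i)) + gfun L (nd (x' i) (y' i))"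
proof -
  have "Vf L (x', I, y', J', N') = gfun L (nd (x' i) (y' i)) + (\<Sum>k\<in>I - {i}. gfun L (nd (x' k) (y' k)))"
    unfolding Vf_def using assms by (simp add: sum.remove)
  also have "(\<Sum>k\<in>I - {i}. gfun L (nd (x' k) (y' k))) = (\<Sum>k\<in>I - {i}. gfun L (nd (x k) (y k)))"
    using assms by (intro sum.cong) auto
  also have "\<dots> = Vf L (x, I, y, J, N) - gfun L (nd (x i) (y i))"
    unfolding Vf_def using assms by (simp add: sum.remove)
  finally show ?thesis by simp
qed

lemma V_same:
  assumes "\<And>k. k \<in> I \<Longrightarrow> x' k = x k \<and> y' k = y k"
  shows "Vf L (x', I, y', J', N') = Vf L (x, I, y, J, N)"
  unfolding Vf_def using assms by (auto intro!: sum.cong)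

lemma sl_concat:
  fixes h :: "_ \<Rightarrow> real"
  shows "sum_list (map h (concat (map (\<lambda>i. map (G i) [True, False]) xs))) = sum_list (map (\<lambda>i. h (G i True) + h (G i False)) xs)"
  by (induct xs) (auto simp: add.assoc)

lemma sl_sorted: "finite A \<Longrightarrow> sum_list (map h (sorted_list_of_set A)) = sum h A"
  by (simp add: sum_list_distinct_conv_sum_set)

lemma V_remove1:
  assumes "finite I" "i \<in> I"
  shows "Vf L (x, I - {i}, y, J', N') = Vf L (x, I, y, J, N) - gfun L (nd (x i) (y i))"
  unfolding Vf_def using assms by (simp add: sum.remove)

lemma V_create: assumes "Inv L (x, I, y, J, N)" shows "Vf L (create (x, I, y, J, N)) \<le> Vf L (x, I, y, J, N)"
proof -
  have fI: "finite I" using assms unfolding Inv_def by (auto intro: finite_subset)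
  have "Vf L (create (x, I, y, J, N)) = (\<Sum>k\<in>insert (N+1) (I - {N+1}). gfun L (nd ((x(N + 1 := 0)) k) ((y(N + 1 := 0)) k)))"
    unfolding create_def Vf_def by (simp add: insert_absorb Un_commute)
  also have "\<dots> = (\<Sum>k\<in>I - {N+1}. gfun L (nd ((x(N + 1 := 0)) k) ((y(N + 1 := 0)) k)))"
    using fI by (subst sum.insert) auto
  also have "\<dots> = (\<Sum>k\<in>I - {N+1}. gfun L (nd (x k) (y k)))" by (intro sum.cong) auto
  also have "\<dots> \<le> (\<Sum>k\<in>I. gfun L (nd (x k) (y k)))"
    using fI assms unfolding Inv_def
    by (intro sum_mono2) (auto intro!: g_nonneg simp: subset_iff, meson le_SucI nd_le)
  finally show ?thesis unfolding Vf_def by simp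
qed

lemma rlab_props: assumes "finite I" "I \<noteq> {}"
  shows "rlab x I \<in> I" "\<And>l. l \<in> I \<Longrightarrow> x l \<le> x (rlab x I)"
proof -
  let ?M = "Max (x ` I)"
  have M: "?M \<in> x ` I" using assms by auto
  have ne: "{i \<in> I. x i = ?M} \<noteq> {}" using M by auto
  have fin: "finite {i \<in> I. x i = ?M}" using assms by auto
  have "rlab x I \<in> {i \<in> I. x i = ?M}" unfolding rlab_def using Max_in[OF fin ne] .
  thus "rlab x I \<in> I" by simp
  show "\<And>l. l \<in> I \<Longrightarrow> x l \<le> x (rlab x I)"
    using \<open>rlab x I \<in> {i \<in> I. x i = ?M}\<close> assms by auto
qed

lemma key_ineq:
  assumes "x k \<le> x i" "y i \<le> y k" "x k \<le> L" "x i \<le> L" "y i \<le> L" "y k \<le> L"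
  shows "gfun L (nd (x k) (y i)) \<le> gfun L (nd (x i) (y i)) + gfun L (nd (x k) (y k))"
proof (cases "x i = y i")
  case True
  have "nd (x k) (y i) \<le> nd (x k) (y k)" using assms True unfolding nd_def by auto
  hence "gfun L (nd (x k) (y i)) \<le> gfun L (nd (x k) (y k))"
    using assms by (intro g_mono) (auto intro: le_SucI nd_le)
  thus ?thesis using True by simp
next
  case F1: False
  show ?thesis
  proof (cases "x k = y k")
    case True
    have "nd (x k) (y i) \<le> nd (x i) (y i)" using assms True unfolding nd_def by auto
    hence "gfun L (nd (x k) (y i)) \<le> gfun L (nd (x i) (y i))"
      using assms by (intro g_mono) (auto intro: le_SucI nd_le)
    thus ?thesis using True by simp
  next
    case False
    have "1 \<le> gfun L (nd (x i) (y i))" using F1 assms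
      by (intro g_ge1) (auto simp: nd_def)
    moreover have "1 \<le> gfun L (nd (x k) (y k))" using False assms
      by (intro g_ge1) (auto simp: nd_def)
    ultimately show ?thesis using g_le2[of L "nd (x k) (y i)"] by linarith
  qed
qed

lemma V_remove: assumes inv: "Inv L (x, I, y, J, N)" shows "Vf L (remove (x, I, y, J, N)) \<le> Vf L (x, I, y, J, N)"
proof (cases "I = {}")
  case True
  thus ?thesis unfolding remove_def by (auto simp: Vf_def)
next
  case ne: False
  have fJ: "finite J" and IJ: "I \<subseteq> J" and xL: "\<forall>i\<in>I. x i \<le> L" and yL: "\<forall>i\<in>J. y i \<le> L"
    using inv unfolding Inv_def by auto
  have fI: "finite I" using fJ IJ by (rule finite_subset[rotated])
  have neJ: "J \<noteq> {}" using ne IJ by auto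
  define i where "i = rlab x I"
  define k where "k = rlab y J"
  have iI: "i \<in> I" and xmax: "\<And>l. l \<in> I \<Longrightarrow> x l \<le> x i"
    using rlab_props[OF fI ne, where x=x] unfolding i_def by auto
  have kJ: "k \<in> J" and ymax: "\<And>l. l \<in> J \<Longrightarrow> y l \<le> y k"
    using rlab_props[OF fJ neJ, where x=y] unfolding k_def by auto
  have gi: "0 \<le> gfun L (nd (x i) (y i))" using iI xL yL IJ
  proof -
    have "nd (x i) (y i) \<le> L" using iI xL yL IJ by (intro nd_le) auto
    thus ?thesis by (intro g_nonneg) auto
  qed
  show ?thesis
  proof (cases "k \<in> I \<and> i \<noteq> k")
    case c: True
    have key: "gfun L (nd (x k) (y i)) \<le> gfun L (nd (x i) (y i)) + gfun L (nd (x k) (y k))"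
      using c iI IJ xL yL xmax ymax by (intro key_ineq) auto
    show ?thesis
    proof (cases "x k \<le> y i")
      case True
      have r: "remove (x, I, y, J, N) = (x, I - {i}, y(k := y i), (J - {k} - {i}) \<union> {k}, N)"
        using ne c True unfolding remove_def i_def k_def Let_def by auto
      have "Vf L (x, I - {i}, y(k := y i), (J - {k} - {i}) \<union> {k}, N)
           = Vf L (x, I - {i}, y, J, N) - gfun L (nd (x k) (y k)) + gfun L (nd (x k) ((y(k := y i)) k))"
        using fI c by (intro V_upd) auto
      also have "Vf L (x, I - {i}, y, J, N) = Vf L (x, I, y, J, N) - gfun L (nd (x i) (y i))"
        using fI iI by (rule V_remove1)
      finally have e: "Vf L (x, I - {i}, y(k := y i), (J - {k} - {i}) \<union> {k}, N) = Vf L (x, I, y, J, N) - gfun L (nd (x i) (y i)) - gfun L (nd (x k) (y k)) + gfun L (nd (x k) (y i))" by (simp add: fun_upd_def)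
      show ?thesis unfolding r using e key by linarith
    next
      case False
      have r: "remove (x, I, y, J, N) = (x(i := x k), (I - {i} - {k}) \<union> {i}, y, J - {k}, N)"
        using ne c False unfolding remove_def i_def k_def Let_def by auto
      have s: "(I - {i} - {k}) \<union> {i} = I - {k}" using c iI by auto
      have "Vf L (x(i := x k), I - {k}, y, J - {k}, N)
           = Vf L (x, I - {k}, y, J, N) - gfun L (nd (x i) (y i)) + gfun L (nd ((x(i := x k)) i) (y i))"
        using fI c iI by (intro V_upd) auto
      also have "Vf L (x, I - {k}, y, J, N) = Vf L (x, I, y, J, N) - gfun L (nd (x k) (y k))"
        using fI c by (intro V_remove1) auto
      finally have e: "Vf L (x(i := x k), I - {k}, y, J - {k}, N) = Vf L (x, I, y, J, N) - gfun L (nd (x i) (y i)) - gfun L (nd (x k) (y k)) + gfun L (nd (x k) (y i))" by (simp add: fun_upd_def)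
      show ?thesis unfolding r s using e key by linarith
    qed
  next
    case False
    have r: "remove (x, I, y, J, N) = (x, I - {i}, y, J - {k}, N)"
      using ne False unfolding remove_def i_def k_def Let_def by auto
    have "Vf L (x, I - {i}, y, J - {k}, N) = Vf L (x, I, y, J, N) - gfun L (nd (x i) (y i))"
      by (rule V_remove1[OF fI iI])
    thus ?thesis unfolding r using gi by simp
  qed
qed

lemma gen:
  assumes inv: "Inv L (x, I, y, J, N)" and j: "0 \<le> j"
  shows "sum_list (map (\<lambda>(r, z). r * (Vf L z - Vf L (x, I, y, J, N))) (coupled_jumps L j (x, I, y, J, N)))
         \<le> - bet L * Vf L (x, I, y, J, N)"
proof -
  define s where "s = (x, I, y, J, N)"
  define E where "E = {i \<in> I. x i = y i}"
  define D where "D = I - E"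
  define \<phi> where "\<phi> = (\<lambda>(r::real, z). r * (Vf L z - Vf L s))"
  define gi where "gi = (\<lambda>i. gfun L (nd (x i) (y i)))"
  have fJ: "finite J" and IJ: "I \<subseteq> J" and xL: "\<forall>i\<in>I. x i \<le> L" and yL: "\<forall>i\<in>J. y i \<le> L"
    using inv unfolding Inv_def by auto
  have fI: "finite I" using fJ IJ by (rule finite_subset[rotated])
  have fD: "finite D" "finite (J - E)" "finite E" using fI fJ unfolding D_def E_def by auto
  define LA where "LA = concat (map (\<lambda>i. map (\<lambda>up. (1/2::real, (x(i := step_pos L (x i) up), I, y, J, N))) [True, False])
                   (sorted_list_of_set D))"
  define LB where "LB = concat (map (\<lambda>i. map (\<lambda>up. (1/2::real, (x, I, y(i := step_pos L (y i) up), J, N))) [True, False])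
                   (sorted_list_of_set (J - E)))"
  define LC where "LC = concat (map (\<lambda>i. map (\<lambda>up. (1/2::real, (x(i := step_pos L (x i) up), I,
                                            y(i := step_pos L (x i) up), J, N))) [True, False])
                   (sorted_list_of_set E))"
  have cj: "coupled_jumps L j s = LA @ LB @ LC @ [(j / real L, create s), (j / real L, remove s)]"
    unfolding coupled_jumps_def s_def LA_def LB_def LC_def D_def E_def Let_def by simp
  have SA: "sum_list (map \<phi> LA) = (\<Sum>i\<in>D. (1/2)*(gfun L (nd (step_pos L (x i) True) (y i)) - gi i)
                                       + (1/2)*(gfun L (nd (step_pos L (x i) False) (y i)) - gi i))"
    unfolding LA_def sl_concat sl_sorted[OF fD(1)]
  proof (intro sum.cong refl)
    fix i assume "i \<in> D"
    hence iI: "i \<in> I" unfolding D_def by auto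
    have "\<And>u. Vf L (x(i := step_pos L (x i) u), I, y, J, N) = Vf L s - gi i + gfun L (nd (step_pos L (x i) u) (y i))"
      unfolding s_def gi_def using fI iI by (subst V_upd[where i=i]) auto
    thus "\<phi> (1/2, (x(i := step_pos L (x i) True), I, y, J, N)) + \<phi> (1/2, (x(i := step_pos L (x i) False), I, y, J, N))
        = (1/2)*(gfun L (nd (step_pos L (x i) True) (y i)) - gi i)
                                       + (1/2)*(gfun L (nd (step_pos L (x i) False) (y i)) - gi i)"
      unfolding \<phi>_def by simp
  qed
  have SB: "sum_list (map \<phi> LB) = (\<Sum>i\<in>D. (1/2)*(gfun L (nd (x i) (step_pos L (y i) True)) - gi i)
                                       + (1/2)*(gfun L (nd (x i) (step_pos L (y i) False)) - gi i))"
  proof -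
    have "sum_list (map \<phi> LB) = (\<Sum>i\<in>J - E. \<phi> (1/2, (x, I, y(i := step_pos L (y i) True), J, N))
                                      + \<phi> (1/2, (x, I, y(i := step_pos L (y i) False), J, N)))"
      unfolding LB_def sl_concat sl_sorted[OF fD(2)] by simp
    also have "\<dots> = (\<Sum>i\<in>D. \<phi> (1/2, (x, I, y(i := step_pos L (y i) True), J, N))
                                      + \<phi> (1/2, (x, I, y(i := step_pos L (y i) False), J, N)))"
    proof (rule sum.mono_neutral_right[OF fD(2)])
      show "D \<subseteq> J - E" using IJ unfolding D_def by auto
      show "\<forall>i\<in>J - E - D. \<phi> (1/2, (x, I, y(i := step_pos L (y i) True), J, N))
                                      + \<phi> (1/2, (x, I, y(i := step_pos L (y i) False), J, N)) = 0"
      proof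
        fix i assume "i \<in> J - E - D"
        hence "i \<notin> I" unfolding D_def E_def by auto
        hence "\<And>u. Vf L (x, I, y(i := step_pos L (y i) u), J, N) = Vf L s"
          unfolding s_def by (intro V_same) auto
        thus "\<phi> (1/2, (x, I, y(i := step_pos L (y i) True), J, N))
                                      + \<phi> (1/2, (x, I, y(i := step_pos L (y i) False), J, N)) = 0"
          unfolding \<phi>_def by simp
      qed
    qed
    also have "\<dots> = (\<Sum>i\<in>D. (1/2)*(gfun L (nd (x i) (step_pos L (y i) True)) - gi i)
                                       + (1/2)*(gfun L (nd (x i) (step_pos L (y i) False)) - gi i))"
    proof (intro sum.cong refl)
      fix i assume "i \<in> D"
      hence iI: "i \<in> I" unfolding D_def by auto
      have "\<And>u. Vf L (x, I, y(i := step_pos L (y i) u), J, N) = Vf L s - gi i + gfun L (nd (x i) (step_pos L (y i) u))"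
        unfolding s_def gi_def using fI iI by (subst V_upd[where i=i]) auto
      thus "\<phi> (1/2, (x, I, y(i := step_pos L (y i) True), J, N)) + \<phi> (1/2, (x, I, y(i := step_pos L (y i) False), J, N))
          = (1/2)*(gfun L (nd (x i) (step_pos L (y i) True)) - gi i)
                                         + (1/2)*(gfun L (nd (x i) (step_pos L (y i) False)) - gi i)"
        unfolding \<phi>_def by simp
    qed
    finally show ?thesis .
  qed
  have SC: "sum_list (map \<phi> LC) = 0"
    unfolding LC_def sl_concat sl_sorted[OF fD(3)]
  proof (intro sum.neutral ballI)
    fix i assume "i \<in> E"
    hence iI: "i \<in> I" and eq: "x i = y i" unfolding E_def by auto
    have "\<And>u. Vf L (x(i := step_pos L (x i) u), I, y(i := step_pos L (x i) u), J, N) = Vf L s"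
      unfolding s_def using fI iI eq by (subst V_upd[where i=i]) auto
    thus "\<phi> (1/2, (x(i := step_pos L (x i) True), I, y(i := step_pos L (x i) True), J, N))
        + \<phi> (1/2, (x(i := step_pos L (x i) False), I, y(i := step_pos L (x i) False), J, N)) = 0"
      unfolding \<phi>_def by simp
  qed
  have Scr: "\<phi> (j / real L, create s) \<le> 0"
    using V_create[OF inv] j unfolding \<phi>_def s_def by (simp add: mult_nonneg_nonpos divide_nonpos_nonneg)
  have Srm: "\<phi> (j / real L, remove s) \<le> 0"
    using V_remove[OF inv] j unfolding \<phi>_def s_def by (simp add: mult_nonneg_nonpos divide_nonpos_nonneg)
  have pair: "(\<Sum>i\<in>D. (1/2)*(gfun L (nd (step_pos L (x i) True) (y i)) - gi i)
                                       + (1/2)*(gfun L (nd (step_pos L (x i) False) (y i)) - gi i))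
         + (\<Sum>i\<in>D. (1/2)*(gfun L (nd (x i) (step_pos L (y i) True)) - gi i)
                                       + (1/2)*(gfun L (nd (x i) (step_pos L (y i) False)) - gi i))
        \<le> (\<Sum>i\<in>D. - bet L * gi i)"
    unfolding sum.distrib[symmetric]
  proof (rule sum_mono)
    fix i assume "i \<in> D"
    hence "x i \<noteq> y i" "x i \<le> L" "y i \<le> L" using xL yL IJ unfolding D_def E_def by auto
    from pair_lemma[OF this] show "(1/2)*(gfun L (nd (step_pos L (x i) True) (y i)) - gi i)
                                       + (1/2)*(gfun L (nd (step_pos L (x i) False) (y i)) - gi i)
         + ((1/2)*(gfun L (nd (x i) (step_pos L (y i) True)) - gi i)
                                       + (1/2)*(gfun L (nd (x i) (step_pos L (y i) False)) - gi i))
        \<le> - bet L * gi i" unfolding gi_def by linarith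
  qed
  have VD: "(\<Sum>i\<in>D. - bet L * gi i) = - bet L * Vf L s"
  proof -
    have "Vf L s = (\<Sum>i\<in>I. gi i)" unfolding Vf_def s_def gi_def by simp
    also have "\<dots> = (\<Sum>i\<in>D. gi i)"
      using fI by (intro sum.mono_neutral_right) (auto simp: D_def E_def gi_def)
    finally show ?thesis by (simp add: sum_distrib_left)
  qed
  have "sum_list (map \<phi> (coupled_jumps L j s))
      = sum_list (map \<phi> LA) + sum_list (map \<phi> LB) + sum_list (map \<phi> LC)
        + \<phi> (j / real L, create s) + \<phi> (j / real L, remove s)"
    unfolding cj by simp
  also have "\<dots> \<le> - bet L * Vf L s" using SA SB SC Scr Srm pair VD by linarith
  finally show ?thesis unfolding \<phi>_def s_def .
qed

lemma step_pos_le: "p \<le> L \<Longrightarrow> step_pos L p u \<le> L" unfolding step_pos_def by auto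

lemma Inv_create: "Inv L (x, I, y, J, N) \<Longrightarrow> Inv L (create (x, I, y, J, N))"
  unfolding Inv_def create_def by auto

lemma Inv_remove: assumes inv: "Inv L (x, I, y, J, N)" shows "Inv L (remove (x, I, y, J, N))"
proof (cases "I = {}")
  case True
  thus ?thesis using inv unfolding remove_def Inv_def by auto
next
  case ne: False
  have fJ: "finite J" and IJ: "I \<subseteq> J" and xL: "\<forall>i\<in>I. x i \<le> L" and yL: "\<forall>i\<in>J. y i \<le> L"
    using inv unfolding Inv_def by auto
  have fI: "finite I" using fJ IJ by (rule finite_subset[rotated])
  have neJ: "J \<noteq> {}" using ne IJ by auto
  define i where "i = rlab x I"
  define k where "k = rlab y J"
  have iI: "i \<in> I" using rlab_props[OF fI ne, where x=x] unfolding i_def by auto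
  have kJ: "k \<in> J" using rlab_props[OF fJ neJ, where x=y] unfolding k_def by auto
  show ?thesis
  proof (cases "k \<in> I \<and> i \<noteq> k")
    case c: True
    show ?thesis
    proof (cases "x k \<le> y i")
      case True
      have r: "remove (x, I, y, J, N) = (x, I - {i}, y(k := y i), (J - {k} - {i}) \<union> {k}, N)"
        using ne c True unfolding remove_def i_def k_def Let_def by auto
      show ?thesis unfolding r Inv_def using fJ IJ xL yL iI c by auto
    next
      case False
      have r: "remove (x, I, y, J, N) = (x(i := x k), (I - {i} - {k}) \<union> {i}, y, J - {k}, N)"
        using ne c False unfolding remove_def i_def k_def Let_def by auto
      show ?thesis unfolding r Inv_def using fJ IJ xL yL iI c by auto
    qed
  next
    case False
    have r: "remove (x, I, y, J, N) = (x, I - {i}, y, J - {k}, N)"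
      using ne False unfolding remove_def i_def k_def Let_def by auto
    show ?thesis unfolding r Inv_def using fJ IJ xL yL iI False by auto
  qed
qed

lemma Inv_jump:
  assumes inv: "Inv L s" and j: "0 \<le> j" and mem: "(r, z) \<in> set (coupled_jumps L j s)"
  shows "Inv L z \<and> 0 \<le> r"
proof -
  obtain x I y J N where s: "s = (x, I, y, J, N)" by (cases s) auto
  have fJ: "finite J" and IJ: "I \<subseteq> J" and xL: "\<forall>i\<in>I. x i \<le> L" and yL: "\<forall>i\<in>J. y i \<le> L"
    using inv unfolding Inv_def s by auto
  have fI: "finite I" using fJ IJ by (rule finite_subset[rotated])
  have c: "Inv L (create s)" "Inv L (remove s)" using Inv_create Inv_remove inv s by auto
  show ?thesis using mem c fI fJ IJ xL yL j
    unfolding coupled_jumps_def s Let_def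
    by (auto simp: Inv_def step_pos_le)
qed



lemma Vf_nonneg': "Inv L s \<Longrightarrow> 0 \<le> Vf L s"
  by (cases s) (auto intro: Vf_nonneg)

lemma sl_shift:
  fixes xs :: "(real \<times> 'a) list"
  shows "sum_list (map (\<lambda>(r, z). r * (h z - c)) xs) = sum_list (map (\<lambda>(r, z). r * h z) xs) - sum_list (map fst xs) * c"
  by (induct xs) (auto simp: algebra_simps)

lemma gen2:
  assumes "Inv L s" "0 \<le> j"
  shows "sum_list (map (\<lambda>(r, z). r * Vf L z) (coupled_jumps L j s)) \<le> (total_rate (coupled_jumps L j) s - bet L) * Vf L s"
proof -
  obtain x I y J N where s: "s = (x, I, y, J, N)" by (cases s) auto
  have "sum_list (map (\<lambda>(r, z). r * (Vf L z - Vf L s)) (coupled_jumps L j s)) \<le> - bet L * Vf L s"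
    using gen[of L x I y J N j] assms s by simp
  thus ?thesis unfolding sl_shift total_rate_def by (simp add: algebra_simps)
qed

lemma gen_nonneg:
  assumes "Inv L s" "0 \<le> j"
  shows "0 \<le> sum_list (map (\<lambda>(r, z). r * Vf L z) (coupled_jumps L j s))"
  by (rule sum_list_nonneg) (use Inv_jump[OF assms] Vf_nonneg' in auto)

lemma exp_cmp:
  assumes "Inv L s" "0 \<le> j" "0 \<le> t"
  shows "Vf L s * exp (- total_rate (coupled_jumps L j) s * t) \<le> Vf L s * exp (- bet L * t)"
proof (cases "Vf L s = 0")
  case True thus ?thesis by simp
next
  case False
  hence pos: "0 < Vf L s" using Vf_nonneg'[OF assms(1)] by simp
  have "0 \<le> (total_rate (coupled_jumps L j) s - bet L) * Vf L s"
    using gen2[OF assms(1,2)] gen_nonneg[OF assms(1,2)] by linarith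
  hence "bet L \<le> total_rate (coupled_jumps L j) s" using pos by (simp add: zero_le_mult_iff)
  thus ?thesis using pos assms(3) by (intro mult_left_mono) (auto intro: mult_right_mono)
qed

lemma f_le_V: assumes "Inv L s" shows "real (card (D_ne s)) \<le> Vf L s"
proof -
  obtain x I y J N where s: "s = (x, I, y, J, N)" by (cases s) auto
  have fJ: "finite J" and IJ: "I \<subseteq> J" and xL: "\<forall>i\<in>I. x i \<le> L" and yL: "\<forall>i\<in>J. y i \<le> L"
    using assms unfolding Inv_def s by auto
  have fI: "finite I" using fJ IJ by (rule finite_subset[rotated])
  have "real (card {i \<in> I. x i \<noteq> y i}) = (\<Sum>i\<in>{i \<in> I. x i \<noteq> y i}. 1)" by simp
  also have "\<dots> \<le> (\<Sum>i\<in>{i \<in> I. x i \<noteq> y i}. gfun L (nd (x i) (y i)))"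
  proof (rule sum_mono)
    fix i assume "i \<in> {i \<in> I. x i \<noteq> y i}"
    moreover have "y i \<le> L" using calculation yL IJ by auto
    ultimately show "1 \<le> gfun L (nd (x i) (y i))" using xL
      by (intro g_ge1) (auto simp: nd_def)
  qed
  also have "\<dots> \<le> (\<Sum>i\<in>I. gfun L (nd (x i) (y i)))"
  proof (rule sum_mono2[OF fI])
    show "\<And>b. b \<in> I - {i \<in> I. x i \<noteq> y i} \<Longrightarrow> 0 \<le> gfun L (nd (x b) (y b))" by auto
  qed auto
  finally show ?thesis unfolding s D_ne_def Vf_def by simp
qed

lemma ennreal_sl:
  assumes "\<And>r z. (r, z) \<in> set xs \<Longrightarrow> 0 \<le> r \<and> 0 \<le> h z"
  shows "sum_list (map (\<lambda>(r, z). ennreal r * ennreal (h z)) xs) = ennreal (sum_list (map (\<lambda>(r, z). r * h z) xs))"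
  using assms
proof (induct xs)
  case Nil thus ?case by simp
next
  case (Cons a xs)
  obtain r z where a: "a = (r, z)" by (cases a) auto
  have pn: "0 \<le> (case p of (r, z) \<Rightarrow> r * h z)" if "p \<in> set xs" for p
  proof -
    obtain r z where p: "p = (r, z)" by (cases p) auto
    have "0 \<le> r \<and> 0 \<le> h z" using Cons.prems[of r z] that p by auto
    thus ?thesis using p by simp
  qed
  have nn: "0 \<le> sum_list (map (\<lambda>(r, z). r * h z) xs)"
    using pn by (intro sum_list_nonneg) auto
  have rz: "0 \<le> r" "0 \<le> h z" using Cons.prems a by auto
  have ih: "sum_list (map (\<lambda>(r, z). ennreal r * ennreal (h z)) xs) = ennreal (sum_list (map (\<lambda>(r, z). r * h z) xs))"
    using Cons by auto
  have "sum_list (map (\<lambda>(r, z). ennreal r * ennreal (h z)) (a # xs))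
      = ennreal r * ennreal (h z) + ennreal (sum_list (map (\<lambda>(r, z). r * h z) xs))" using a ih by simp
  also have "\<dots> = ennreal (r * h z + sum_list (map (\<lambda>(r, z). r * h z) xs))"
    using rz nn by (simp add: ennreal_mult ennreal_plus mult_nonneg_nonneg)
  finally show ?case using a by simp
qed

lemma sl_mono_ennreal:
  fixes f g :: "'a \<Rightarrow> ennreal"
  shows "(\<And>x. x \<in> set xs \<Longrightarrow> f x \<le> g x) \<Longrightarrow> sum_list (map f xs) \<le> sum_list (map g xs)"
proof (induct xs)
  case Nil thus ?case by simp
next
  case (Cons a xs)
  thus ?case by (simp add: add_mono)
qed

lemma integral_bound:
  fixes V q b t :: real
  assumes t: "0 \<le> t" and K: "0 \<le> (q - b) * V"
  shows "(\<integral>\<^sup>+u. ennreal ((q - b) * V * exp (- b * t) * exp (- (q - b) * u)) * indicator {0..t} u \<partial>lborel)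
         = ennreal (V * exp (- b * t) - V * exp (- q * t))"
proof -
  define F where "F = (\<lambda>u. - V * exp (- b * t) * exp (- (q - b) * u))"
  have d: "(F has_vector_derivative ((q - b) * V * exp (- b * t) * exp (- (q - b) * u))) (at u within {0..t})" for u
  proof -
    have "(F has_real_derivative ((q - b) * V * exp (- b * t) * exp (- (q - b) * u))) (at u within {0..t})"
      unfolding F_def by (auto intro!: derivative_eq_intros simp: algebra_simps)
    thus ?thesis by (simp add: has_real_derivative_iff_has_vector_derivative)
  qed
  have I: "((\<lambda>u. (q - b) * V * exp (- b * t) * exp (- (q - b) * u)) has_integral (F t - F 0)) {0..t}"
    by (rule fundamental_theorem_of_calculus[OF t d])
  have e: "exp (- b * t) * exp (- (q - b) * t) = exp (- q * t)"
    by (simp add: exp_add[symmetric] algebra_simps)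
  have "F t - F 0 = V * exp (- b * t) - V * exp (- q * t)"
    unfolding F_def using e by (simp add: algebra_simps)
  moreover have "(\<integral>\<^sup>+u. ennreal ((q - b) * V * exp (- b * t) * exp (- (q - b) * u)) * indicator {0..t} u \<partial>lborel)
         = ennreal (F t - F 0)"
    by (rule nn_integral_has_integral_lebesgue'[OF _ I]) (use K in auto)
  ultimately show ?thesis by simp
qed

lemma sl_scale:
  fixes xs :: "(real \<times> 'a) list"
  shows "sum_list (map (\<lambda>(r, z). r * (c * h z)) xs) = c * sum_list (map (\<lambda>(r, z). r * h z) xs)"
  by (induct xs) (auto simp: algebra_simps)

lemma iter_bound:
  assumes j: "0 \<le> j"
  shows "Inv L s \<Longrightarrow> 0 \<le> t \<Longrightarrow>
    ctmc_iter (coupled_jumps L j) (\<lambda>s. of_nat (card (D_ne s))) n t s \<le> ennreal (exp (- bet L * t) * Vf L s)"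
proof (induct n arbitrary: t s)
  case 0
  let ?q = "total_rate (coupled_jumps L j) s"
  have "ctmc_iter (coupled_jumps L j) (\<lambda>s. of_nat (card (D_ne s))) 0 t s
      = ennreal (exp (- ?q * t)) * ennreal (real (card (D_ne s)))" by (simp add: ennreal_of_nat_eq_real_of_nat)
  also have "\<dots> \<le> ennreal (exp (- ?q * t)) * ennreal (Vf L s)"
    using f_le_V[OF 0(1)] by (intro mult_left_mono ennreal_leI) auto
  also have "\<dots> = ennreal (Vf L s * exp (- ?q * t))"
    using Vf_nonneg'[OF 0(1)] by (simp add: ennreal_mult mult.commute)
  also have "\<dots> \<le> ennreal (exp (- bet L * t) * Vf L s)"
    using exp_cmp[OF 0(1) j 0(2)] by (intro ennreal_leI) (simp add: mult.commute)
  finally show ?case .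
next
  case (Suc n)
  let ?Q = "coupled_jumps L j"
  let ?f = "\<lambda>s. of_nat (card (D_ne s)) :: ennreal"
  let ?q = "total_rate ?Q s"
  define V where "V = Vf L s"
  define b where "b = bet L"
  define S where "S = sum_list (map (\<lambda>(r, z). r * Vf L z) (?Q s))"
  have V0: "0 \<le> V" unfolding V_def using Vf_nonneg'[OF Suc(2)] .
  have SK: "S \<le> (?q - b) * V" unfolding S_def V_def b_def using gen2[OF Suc(2) j] .
  have S0: "0 \<le> S" unfolding S_def using gen_nonneg[OF Suc(2) j] .
  have K0: "0 \<le> (?q - b) * V" using SK S0 by linarith
  have pt: "indicator {0..t} u * ennreal (exp (- ?q * u)) *
        sum_list (map (\<lambda>(r, z). ennreal r * ctmc_iter ?Q ?f n (t - u) z) (?Q s))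
      \<le> ennreal ((?q - b) * V * exp (- b * t) * exp (- (?q - b) * u)) * indicator {0..t} u" for u
  proof (cases "u \<in> {0..t}")
    case False thus ?thesis by simp
  next
    case True
    hence tu: "0 \<le> t - u" by auto
    have "sum_list (map (\<lambda>(r, z). ennreal r * ctmc_iter ?Q ?f n (t - u) z) (?Q s))
        \<le> sum_list (map (\<lambda>(r, z). ennreal r * ennreal (exp (- b * (t - u)) * Vf L z)) (?Q s))"
    proof (rule sl_mono_ennreal)
      fix p assume p: "p \<in> set (?Q s)"
      obtain r z where pr: "p = (r, z)" by (cases p) auto
      have "Inv L z" using Inv_jump[OF Suc(2) j] p pr by auto
      hence "ctmc_iter ?Q ?f n (t - u) z \<le> ennreal (exp (- bet L * (t - u)) * Vf L z)"
        using Suc(1)[OF _ tu] by auto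
      thus "(case p of (r, z) \<Rightarrow> ennreal r * ctmc_iter ?Q ?f n (t - u) z)
          \<le> (case p of (r, z) \<Rightarrow> ennreal r * ennreal (exp (- b * (t - u)) * Vf L z))"
        unfolding pr b_def by (simp add: mult_left_mono)
    qed
    also have "\<dots> = ennreal (sum_list (map (\<lambda>(r, z). r * (exp (- b * (t - u)) * Vf L z)) (?Q s)))"
    proof (rule ennreal_sl)
      fix r z assume "(r, z) \<in> set (?Q s)"
      thus "0 \<le> r \<and> 0 \<le> exp (- b * (t - u)) * Vf L z"
        using Inv_jump[OF Suc(2) j] Vf_nonneg' by auto
    qed
    also have "sum_list (map (\<lambda>(r, z). r * (exp (- b * (t - u)) * Vf L z)) (?Q s)) = exp (- b * (t - u)) * S"
      unfolding S_def by (rule sl_scale)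
    finally have A: "sum_list (map (\<lambda>(r, z). ennreal r * ctmc_iter ?Q ?f n (t - u) z) (?Q s))
        \<le> ennreal (exp (- b * (t - u)) * S)" .
    have "indicator {0..t} u * ennreal (exp (- ?q * u)) *
        sum_list (map (\<lambda>(r, z). ennreal r * ctmc_iter ?Q ?f n (t - u) z) (?Q s))
       \<le> ennreal (exp (- ?q * u)) * ennreal (exp (- b * (t - u)) * S)"
      using True A by (simp add: mult_left_mono)
    also have "\<dots> = ennreal (exp (- ?q * u) * (exp (- b * (t - u)) * S))"
      using S0 by (simp add: ennreal_mult[symmetric])
    also have "\<dots> \<le> ennreal (exp (- ?q * u) * (exp (- b * (t - u)) * ((?q - b) * V)))"
      using SK by (intro ennreal_leI mult_left_mono) auto
    also have "exp (- ?q * u) * (exp (- b * (t - u)) * ((?q - b) * V))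
        = (?q - b) * V * exp (- b * t) * exp (- (?q - b) * u)"
    proof -
      have "exp (- ?q * u) * exp (- b * (t - u)) = exp (- b * t) * exp (- (?q - b) * u)"
        by (simp add: exp_add[symmetric] algebra_simps)
      thus ?thesis by (simp add: algebra_simps)
    qed
    finally show ?thesis using True by simp
  qed
  have "ctmc_iter ?Q ?f (Suc n) t s
      \<le> ennreal (exp (- ?q * t)) * ?f s
        + (\<integral>\<^sup>+u. ennreal ((?q - b) * V * exp (- b * t) * exp (- (?q - b) * u)) * indicator {0..t} u \<partial>lborel)"
    by (simp only: ctmc_iter.simps) (intro add_left_mono nn_integral_mono pt)
  also have "(\<integral>\<^sup>+u. ennreal ((?q - b) * V * exp (- b * t) * exp (- (?q - b) * u)) * indicator {0..t} u \<partial>lborel)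
      = ennreal (V * exp (- b * t) - V * exp (- ?q * t))"
    by (rule integral_bound[OF Suc(3) K0])
  also have "ennreal (exp (- ?q * t)) * ?f s \<le> ennreal (V * exp (- ?q * t))"
  proof -
    have "ennreal (exp (- ?q * t)) * ?f s = ennreal (exp (- ?q * t)) * ennreal (real (card (D_ne s)))"
      by (simp add: ennreal_of_nat_eq_real_of_nat)
    also have "\<dots> \<le> ennreal (exp (- ?q * t)) * ennreal V"
      using f_le_V[OF Suc(2)] unfolding V_def by (intro mult_left_mono ennreal_leI) auto
    also have "\<dots> = ennreal (V * exp (- ?q * t))" using V0 by (simp add: ennreal_mult mult.commute)
    finally show ?thesis .
  qed
  hence "ennreal (exp (- ?q * t)) * ?f s + ennreal (V * exp (- b * t) - V * exp (- ?q * t))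
      \<le> ennreal (V * exp (- ?q * t)) + ennreal (V * exp (- b * t) - V * exp (- ?q * t))"
    by (rule add_right_mono)
  also have "\<dots> = ennreal (exp (- bet L * t) * Vf L s)"
  proof -
    have "V * exp (- ?q * t) \<le> V * exp (- b * t)"
      using exp_cmp[OF Suc(2) j Suc(3)] unfolding V_def b_def .
    thus ?thesis using V0 unfolding V_def b_def by (subst ennreal_plus[symmetric]) (auto simp: mult.commute)
  qed
  finally show ?case .
qed

lemma bet_ge: assumes "0 < L" shows "1/4 * (1 / real L)^2 \<le> bet L"
proof -
  have L1: "1 \<le> real L" using assms by simp
  have "0 \<le> (3 * real L + 1) * (real L - 1)" using L1 by (intro mult_nonneg_nonneg) auto
  hence "(real L + 1)^2 \<le> 4 * (real L)^2" by (simp add: power2_eq_square algebra_simps)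
  hence "1 / (4 * (real L)^2) \<le> 1 / (real L + 1)^2"
    by (intro divide_left_mono) (use L1 in auto)
  thus ?thesis unfolding bet_def by (simp add: power_divide)
qed

lemma main_bound:
  fixes j :: real and L :: nat and t :: real and n m :: nat and x0 y0 :: "nat \<Rightarrow> nat"
  assumes "j > 0" and L: "L > 0" and t: "t \<ge> 0" and xb: "\<forall>i \<in> {1..n}. x0 i \<le> L"
    and yb: "\<forall>i \<in> {1..n+m}. y0 i \<le> L"
  shows "ctmc_expect (coupled_jumps L j) (\<lambda>s. of_nat (card (D_ne s))) t (x0, {1..n}, y0, {1..n+m}, n+m)
      \<le> ennreal (2 * real n * exp (- (1/4) * (1 / real L)^2 * t))"
proof -
  let ?s = "(x0, {1..n}, y0, {1..n+m}, n+m)"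
  have inv: "Inv L ?s" unfolding Inv_def using xb yb by auto
  have V2: "Vf L ?s \<le> 2 * real n"
  proof -
    have "Vf L ?s = (\<Sum>i\<in>{1..n}. gfun L (nd (x0 i) (y0 i)))" unfolding Vf_def by simp
    also have "\<dots> \<le> (\<Sum>i\<in>{1..n}. 2)" by (intro sum_mono g_le2)
    finally show ?thesis by simp
  qed
  have V0: "0 \<le> Vf L ?s" using Vf_nonneg'[OF inv] .
  have e: "exp (- bet L * t) \<le> exp (- (1/4) * (1 / real L)^2 * t)"
  proof -
    have "1/4 * (1 / real L)^2 * t \<le> bet L * t" by (rule mult_right_mono[OF bet_ge[OF L] t])
    thus ?thesis by simp
  qed
  have "exp (- bet L * t) * Vf L ?s \<le> exp (- (1/4) * (1 / real L)^2 * t) * (2 * real n)"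
    using e V2 V0 by (intro mult_mono) auto
  hence fin: "exp (- bet L * t) * Vf L ?s \<le> 2 * real n * exp (- (1/4) * (1 / real L)^2 * t)"
    by (simp add: mult.commute)
  have "ctmc_expect (coupled_jumps L j) (\<lambda>s. of_nat (card (D_ne s))) t ?s \<le> ennreal (exp (- bet L * t) * Vf L ?s)"
    unfolding ctmc_expect_def
    by (rule SUP_least, rule iter_bound) (use assms inv t in auto)
  also have "\<dots> \<le> ennreal (2 * real n * exp (- (1/4) * (1 / real L)^2 * t))"
    using fin by (rule ennreal_leI)
  finally show "ctmc_expect (coupled_jumps L j) (\<lambda>s. of_nat (card (D_ne s))) t ?s
      \<le> ennreal (2 * real n * exp (- (1/4) * (1 / real L)^2 * t))" .
qed


theorem theorem4p6:
  fixes j :: real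
  assumes "j > 0"
  shows "\<exists>c > 0. \<exists>b > 0. \<forall>(L::nat) (t::real) (n::nat) (m::nat) (x0::nat \<Rightarrow> nat) (y0::nat \<Rightarrow> nat).
           L > 0 \<longrightarrow> t \<ge> 0 \<longrightarrow> n > 0 \<longrightarrow>
           (\<forall>i \<in> {1..n}. x0 i \<le> L) \<longrightarrow> (\<forall>i \<in> {1..n+m}. y0 i \<le> L) \<longrightarrow>
           ctmc_expect (coupled_jumps L j) (\<lambda>s. of_nat (card (D_ne s))) t
               (x0, {1..n}, y0, {1..n+m}, n+m)
             \<le> ennreal (c * real n * exp (- b * (1 / real L)^2 * t))"
  apply (rule exI[of _ "2::real"], simp, rule exI[of _ "1/4::real"], simp)
  using main_bound[OF assms] by simp

end
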